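(* Let $A$ be a metabelian Lie algebra over a field $k$. Then $A$ is a $U$-algebra if and only if every finitely generated subalgebra of $A$ is a $U$-algebra.
   Context: A Lie algebra is metabelian if $(a\circ b)\circ(c\circ d)=0$ identically; $A^2$ is the ideal spanned by all products; $\mathrm{Fit}(A)$ is the ideal generated by all elements lying in nilpotent ideals of $A$. If $\mathrm{Fit}(A)$ is abelian, choose $\{a_\alpha:\alpha\in\Lambda\}\subseteq A$ whose images form a basis of $A/\mathrm{Fit}(A)$ and let $R=k[x_\alpha:\alpha\in\Lambda]$; then $\mathrm{Fit}(A)$ is an $R$-module via $b\cdot x_\alpha=b\circ a_\alpha$, extended multiplicatively and linearly (torsion-freeness does not depend on the choice). $A$ is a (metabelian Lie) $U$-algebra if $\mathrm{Fit}(A)$ is abelian and is a torsion-free $R$-module. *)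

theory Defs
  imports Main "HOL.Vector_Spaces" "HOL-Library.Multiset" "HOL-Library.Poly_Mapping"
begin

definition lie_algebra :: "('k::field \<Rightarrow> 'v::ab_group_add \<Rightarrow> 'v) \<Rightarrow> ('v \<Rightarrow> 'v \<Rightarrow> 'v) \<Rightarrow> bool" where
  "lie_algebra scale br \<longleftrightarrow> vector_space scale
     \<and> (\<forall>x y z. br (x + y) z = br x z + br y z)
     \<and> (\<forall>x y z. br x (y + z) = br x y + br x z)
     \<and> (\<forall>c x y. br (scale c x) y = scale c (br x y))
     \<and> (\<forall>c x y. br x (scale c y) = scale c (br x y))
     \<and> (\<forall>x. br x x = 0)
     \<and> (\<forall>x y z. br x (br y z) + br y (br z x) + br z (br x y) = 0)"

definition lie_subalg :: "('k::field \<Rightarrow> 'v::ab_group_add \<Rightarrow> 'v) \<Rightarrow> ('v \<Rightarrow> 'v \<Rightarrow> 'v) \<Rightarrow> 'v set \<Rightarrow> bool" where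
  "lie_subalg scale br S \<longleftrightarrow> module.subspace scale S \<and> (\<forall>x\<in>S. \<forall>y\<in>S. br x y \<in> S)"

definition lie_gen :: "('k::field \<Rightarrow> 'v::ab_group_add \<Rightarrow> 'v) \<Rightarrow> ('v \<Rightarrow> 'v \<Rightarrow> 'v) \<Rightarrow> 'v set \<Rightarrow> 'v set" where
  "lie_gen scale br X = \<Inter>{T. lie_subalg scale br T \<and> X \<subseteq> T}"

definition lie_ideal :: "('k::field \<Rightarrow> 'v::ab_group_add \<Rightarrow> 'v) \<Rightarrow> ('v \<Rightarrow> 'v \<Rightarrow> 'v) \<Rightarrow> 'v set \<Rightarrow> 'v set \<Rightarrow> bool" where
  "lie_ideal scale br S I \<longleftrightarrow> module.subspace scale I \<and> I \<subseteq> S \<and> (\<forall>x\<in>I. \<forall>y\<in>S. br x y \<in> I)"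

primrec lcs :: "('k::field \<Rightarrow> 'v::ab_group_add \<Rightarrow> 'v) \<Rightarrow> ('v \<Rightarrow> 'v \<Rightarrow> 'v) \<Rightarrow> 'v set \<Rightarrow> nat \<Rightarrow> 'v set" where
  "lcs scale br I 0 = I"
| "lcs scale br I (Suc n) = module.span scale {br x y | x y. x \<in> lcs scale br I n \<and> y \<in> I}"

definition lie_nilpotent :: "('k::field \<Rightarrow> 'v::ab_group_add \<Rightarrow> 'v) \<Rightarrow> ('v \<Rightarrow> 'v \<Rightarrow> 'v) \<Rightarrow> 'v set \<Rightarrow> bool" where
  "lie_nilpotent scale br I \<longleftrightarrow> (\<exists>n. lcs scale br I n = {0})"

definition ideal_gen :: "('k::field \<Rightarrow> 'v::ab_group_add \<Rightarrow> 'v) \<Rightarrow> ('v \<Rightarrow> 'v \<Rightarrow> 'v) \<Rightarrow> 'v set \<Rightarrow> 'v set \<Rightarrow> 'v set" where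
  "ideal_gen scale br S X = \<Inter>{J. lie_ideal scale br S J \<and> X \<subseteq> J}"

definition fit :: "('k::field \<Rightarrow> 'v::ab_group_add \<Rightarrow> 'v) \<Rightarrow> ('v \<Rightarrow> 'v \<Rightarrow> 'v) \<Rightarrow> 'v set \<Rightarrow> 'v set" where
  "fit scale br S = ideal_gen scale br S (\<Union>{I. lie_ideal scale br S I \<and> lie_nilpotent scale br I})"

definition lie_abelian :: "('v::ab_group_add \<Rightarrow> 'v \<Rightarrow> 'v) \<Rightarrow> 'v set \<Rightarrow> bool" where
  "lie_abelian br I \<longleftrightarrow> (\<forall>x\<in>I. \<forall>y\<in>I. br x y = 0)"

definition metabelian :: "('v::ab_group_add \<Rightarrow> 'v \<Rightarrow> 'v) \<Rightarrow> 'v set \<Rightarrow> bool" where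
  "metabelian br S \<longleftrightarrow> (\<forall>a\<in>S. \<forall>b\<in>S. \<forall>c\<in>S. \<forall>d\<in>S. br (br a b) (br c d) = 0)"

text \<open>B \<subseteq> S is a set of representatives whose images form a basis of S/F.\<close>
definition basis_mod :: "('k::field \<Rightarrow> 'v::ab_group_add \<Rightarrow> 'v) \<Rightarrow> 'v set \<Rightarrow> 'v set \<Rightarrow> 'v set \<Rightarrow> bool" where
  "basis_mod scale S F B \<longleftrightarrow> B \<subseteq> S
     \<and> (\<forall>B' c. finite B' \<and> B' \<subseteq> B \<and> (\<Sum>b\<in>B'. scale (c b) b) \<in> F \<longrightarrow> (\<forall>b\<in>B'. c b = 0))
     \<and> S \<subseteq> module.span scale (B \<union> F)"

text \<open>Action of a monomial (multiset of variables x_a, a \<in> B) on b: b \<circ> a1 \<circ> ... \<circ> an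
(left-normed; the order is irrelevant on an abelian Fit(A)).\<close>
definition mon_act :: "('v \<Rightarrow> 'v \<Rightarrow> 'v) \<Rightarrow> 'v \<Rightarrow> 'v multiset \<Rightarrow> 'v" where
  "mon_act br b M = foldl (\<lambda>x a. br x a) b (SOME xs. mset xs = M)"

text \<open>Polynomials in R = k[x_a : a \<in> B]: finitely supported maps from monomials to k.\<close>
definition poly_act :: "('k::field \<Rightarrow> 'v::ab_group_add \<Rightarrow> 'v) \<Rightarrow> ('v \<Rightarrow> 'v \<Rightarrow> 'v) \<Rightarrow> 'v \<Rightarrow> ('v multiset \<Rightarrow>\<^sub>0 'k) \<Rightarrow> 'v" where
  "poly_act scale br b f = (\<Sum>M\<in>Poly_Mapping.keys f. scale (Poly_Mapping.lookup f M) (mon_act br b M))"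

definition torsion_free :: "('k::field \<Rightarrow> 'v::ab_group_add \<Rightarrow> 'v) \<Rightarrow> ('v \<Rightarrow> 'v \<Rightarrow> 'v) \<Rightarrow> 'v set \<Rightarrow> 'v set \<Rightarrow> bool" where
  "torsion_free scale br F B \<longleftrightarrow>
     (\<forall>b\<in>F. \<forall>f :: 'v multiset \<Rightarrow>\<^sub>0 'k. f \<noteq> 0 \<and> (\<forall>M\<in>Poly_Mapping.keys f. set_mset M \<subseteq> B)
        \<and> poly_act scale br b f = 0 \<longrightarrow> b = 0)"

definition U_algebra :: "('k::field \<Rightarrow> 'v::ab_group_add \<Rightarrow> 'v) \<Rightarrow> ('v \<Rightarrow> 'v \<Rightarrow> 'v) \<Rightarrow> 'v set \<Rightarrow> bool" where
  "U_algebra scale br S \<longleftrightarrow> lie_abelian br (fit scale br S)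
     \<and> (\<exists>B. basis_mod scale S (fit scale br S) B \<and> torsion_free scale br (fit scale br S) B)"

end

theory Submission
  imports Defs
begin


locale LA = vector_space scale for scale :: "'k::field \<Rightarrow> 'v::ab_group_add \<Rightarrow> 'v" (infixr \<open>*s\<close> 75) +
  fixes br :: "'v \<Rightarrow> 'v \<Rightarrow> 'v"
  assumes addL: "br (x + y) z = br x z + br y z"
    and addR: "br x (y + z) = br x y + br x z"
    and scL: "br (c *s x) y = c *s (br x y)"
    and scR: "br x (c *s y) = c *s (br x y)"
    and alt: "br x x = 0"
    and jac: "br x (br y z) + br y (br z x) + br z (br x y) = 0"

lemma LA_of: "lie_algebra scale br \<Longrightarrow> LA scale br"
  unfolding lie_algebra_def LA_def LA_axioms_def by blast

context LA begin

lemma br0L[simp]: "br 0 y = 0"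
  using addL[of 0 0 y] by simp
lemma br0R[simp]: "br x 0 = 0"
  using addR[of x 0 0] by simp
lemma anti: "br x y = - br y x"
proof -
  have "br (x+y) (x+y) = 0" by (rule alt)
  hence "br x x + br y x + (br x y + br y y) = 0" by (simp only: addL addR)
  hence "br y x + br x y = 0" by (simp only: alt add_0_left add_0_right)
  thus ?thesis by (metis add.commute add_eq_0_iff)
qed
lemma negL: "br (- x) y = - br x y"
proof -
  have "br (x + - x) y = 0" by simp
  hence "br x y + br (-x) y = 0" by (simp only: addL)
  thus ?thesis by (metis add.commute add_eq_0_iff)
qed
lemma negR: "br x (- y) = - br x y"
proof -
  have "br x (y + - y) = 0" by simp
  hence "br x y + br x (-y) = 0" by (simp only: addR)
  thus ?thesis by (metis add.commute add_eq_0_iff)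
qed
lemma diffL: "br (x - y) z = br x z - br y z"
  by (simp only: diff_conv_add_uminus addL negL)
lemma diffR: "br x (y - z) = br x y - br x z"
  by (simp only: diff_conv_add_uminus addR negR)
lemma sumL: "br (sum f A) y = (\<Sum>a\<in>A. br (f a) y)"
  by (induction A rule: infinite_finite_induct) (auto simp: addL)
lemma sumR: "br y (sum f A) = (\<Sum>a\<in>A. br y (f a))"
  by (induction A rule: infinite_finite_induct) (auto simp: addR)

lemma subspace_brL: "subspace {x. br x y \<in> T}" if "subspace T"
  using that unfolding subspace_def by (auto simp: addL scL)
lemma subspace_brR: "subspace {y. br x y \<in> T}" if "subspace T"
  using that unfolding subspace_def by (auto simp: addR scR)

end


lemma mon_act_empty[simp]: "mon_act br b {#} = b"
  unfolding mon_act_def by simp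

locale SET = LA scale br for scale :: "'k::field \<Rightarrow> 'v::ab_group_add \<Rightarrow> 'v" (infixr \<open>*s\<close> 75) and br +
  fixes S F :: "'v set"
  assumes S_sub: "subspace S" and F_sub: "subspace F" and FS: "F \<subseteq> S"
    and F_id: "x \<in> F \<Longrightarrow> y \<in> S \<Longrightarrow> br x y \<in> F"
    and F_ab: "x \<in> F \<Longrightarrow> y \<in> F \<Longrightarrow> br x y = 0"
    and SS: "x \<in> S \<Longrightarrow> y \<in> S \<Longrightarrow> br x y \<in> F"
begin

lemma comm: assumes "x \<in> F" "a1 \<in> S" "a2 \<in> S"
  shows "br (br x a1) a2 = br (br x a2) a1"
proof -
  have j: "br x (br a1 a2) + br a1 (br a2 x) + br a2 (br x a1) = 0" by (rule jac)
  have "br x (br a1 a2) = 0" using assms SS F_ab by blast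
  moreover have "br a1 (br a2 x) = br (br x a2) a1"
    by (metis anti negL)
  moreover have "br a2 (br x a1) = - br (br x a1) a2"
    by (rule anti)
  ultimately have "br (br x a2) a1 + - br (br x a1) a2 = 0" using j by simp
  thus ?thesis by (metis add.commute add_eq_0_iff neg_equal_iff_equal)
qed

lemma foldl_F: "x \<in> F \<Longrightarrow> set xs \<subseteq> S \<Longrightarrow> foldl br x xs \<in> F"
  by (induction xs arbitrary: x) (auto intro: F_id)

lemma foldl_swap: "x \<in> F \<Longrightarrow> set ys \<subseteq> S \<Longrightarrow> a \<in> S \<Longrightarrow> br (foldl br x ys) a = foldl br (br x a) ys"
proof (induction ys arbitrary: x)
  case Nil then show ?case by simp
next
  case (Cons c ys)
  have "br (foldl br x (c # ys)) a = br (foldl br (br x c) ys) a" by simp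
  also have "\<dots> = foldl br (br (br x c) a) ys"
    using Cons F_id by auto
  also have "br (br x c) a = br (br x a) c" using comm Cons by auto
  finally show ?case by simp
qed

lemma foldl_perm: "mset xs = mset ys \<Longrightarrow> x \<in> F \<Longrightarrow> set xs \<subseteq> S \<Longrightarrow> foldl br x xs = foldl br x ys"
proof (induction xs arbitrary: x ys)
  case Nil then show ?case by simp
next
  case (Cons a xs)
  have "a \<in> set ys" using Cons.prems(1) by (metis list.set_intros(1) set_mset_mset)
  then obtain ys1 ys2 where ys: "ys = ys1 @ a # ys2" by (meson split_list)
  have sy: "set ys \<subseteq> S" using Cons.prems by (metis set_mset_mset)
  have "foldl br x ys = foldl br (br (foldl br x ys1) a) ys2" using ys by simp
  also have "\<dots> = foldl br (foldl br (br x a) ys1) ys2"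
    using foldl_swap[of x ys1 a] Cons.prems sy ys by auto
  also have "\<dots> = foldl br (br x a) (ys1 @ ys2)" by simp
  also have "\<dots> = foldl br (br x a) xs"
    using Cons.prems ys F_id by (intro Cons.IH[symmetric]) auto
  finally show ?case by simp
qed

lemma mon_act_foldl: "mset xs = M \<Longrightarrow> b \<in> F \<Longrightarrow> set_mset M \<subseteq> S \<Longrightarrow> mon_act br b M = foldl br b xs"
  unfolding mon_act_def
  by (metis (mono_tags, lifting) ex_mset foldl_perm set_mset_mset someI_ex)

lemma mon_act_F: "b \<in> F \<Longrightarrow> set_mset M \<subseteq> S \<Longrightarrow> mon_act br b M \<in> F"
  by (metis ex_mset foldl_F mon_act_foldl set_mset_mset)

lemma mon_act_add: "b \<in> F \<Longrightarrow> a \<in> S \<Longrightarrow> set_mset M \<subseteq> S \<Longrightarrow>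
    mon_act br b (add_mset a M) = br (mon_act br b M) a"
proof -
  assume b: "b \<in> F" and a: "a \<in> S" and M: "set_mset M \<subseteq> S"
  obtain xs where xs: "mset xs = M" using ex_mset by blast
  have "mset (xs @ [a]) = add_mset a M" using xs by simp
  hence "mon_act br b (add_mset a M) = foldl br b (xs @ [a])"
    using mon_act_foldl[of "xs @ [a]" "add_mset a M" b] b a M by auto
  also have "\<dots> = br (foldl br b xs) a" by simp
  also have "foldl br b xs = mon_act br b M" using mon_act_foldl xs b M by auto
  finally show ?thesis .
qed

end


definition mindep :: "('k::field \<Rightarrow> 'v::ab_group_add \<Rightarrow> 'v) \<Rightarrow> ('v \<Rightarrow> 'v \<Rightarrow> 'v) \<Rightarrow> 'v \<Rightarrow> 'v set \<Rightarrow> bool" where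
  "mindep scale br b C \<longleftrightarrow> (\<forall>K c. finite K \<and> (\<forall>M\<in>K. set_mset M \<subseteq> C) \<and>
      (\<Sum>M\<in>K. scale (c M) (mon_act br b M)) = 0 \<longrightarrow> (\<forall>M\<in>K. c M = 0))"

lemma mindepD: "mindep scale br b C \<Longrightarrow> finite K \<Longrightarrow> (\<And>M. M \<in> K \<Longrightarrow> set_mset M \<subseteq> C) \<Longrightarrow>
   (\<Sum>M\<in>K. scale (c M) (mon_act br b M)) = 0 \<Longrightarrow> M \<in> K \<Longrightarrow> c M = 0"
  unfolding mindep_def by blast

lemma mindep_mono: "mindep scale br b C \<Longrightarrow> C' \<subseteq> C \<Longrightarrow> mindep scale br b C'"
  unfolding mindep_def by blast

lemma finite_msets: "finite C \<Longrightarrow> finite {M. set_mset M \<subseteq> C \<and> size M \<le> n}"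
proof -
  assume fC: "finite C"
  have "{M. set_mset M \<subseteq> C \<and> size M \<le> n} \<subseteq> mset ` {xs. set xs \<subseteq> C \<and> length xs \<le> n}"
  proof
    fix M assume "M \<in> {M. set_mset M \<subseteq> C \<and> size M \<le> n}"
    moreover obtain xs where xs: "mset xs = M" using ex_mset by blast
    ultimately show "M \<in> mset ` {xs. set xs \<subseteq> C \<and> length xs \<le> n}"
      by (intro image_eqI[of _ _ xs]) auto
  qed
  thus ?thesis using finite_lists_length_le[OF fC] finite_subset by blast
qed

lemma card_msets_le:
  assumes "finite C" "finite C'" "card C' \<le> card C"
  shows "card {M. set_mset M \<subseteq> C' \<and> size M \<le> n} \<le> card {M. set_mset M \<subseteq> C \<and> size M \<le> n}"
proof -
  obtain g where g: "g ` C' \<subseteq> C" "inj_on g C'" using card_le_inj[OF assms(2) assms(1) assms(3)] by blast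
  let ?K' = "{M. set_mset M \<subseteq> C' \<and> size M \<le> n}"
  let ?K = "{M. set_mset M \<subseteq> C \<and> size M \<le> n}"
  have "inj_on (image_mset g) ?K'"
  proof
    fix M1 M2 assume M1: "M1 \<in> ?K'" and M2: "M2 \<in> ?K'" and eq: "image_mset g M1 = image_mset g M2"
    have inv: "image_mset (inv_into C' g) (image_mset g M) = M" if "set_mset M \<subseteq> C'" for M
    proof -
      have "image_mset (inv_into C' g) (image_mset g M) = image_mset (inv_into C' g \<circ> g) M"
        by (simp add: image_mset.compositionality)
      also have "\<dots> = image_mset id M"
        by (rule image_mset_cong) (use that g in \<open>auto simp: inv_into_f_f\<close>)
      finally show ?thesis by simp
    qed
    have s1: "set_mset M1 \<subseteq> C'" and s2: "set_mset M2 \<subseteq> C'" using M1 M2 by auto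
    have "M1 = image_mset (inv_into C' g) (image_mset g M1)" using inv[OF s1] by simp
    also have "\<dots> = image_mset (inv_into C' g) (image_mset g M2)" using eq by simp
    also have "\<dots> = M2" using inv[OF s2] by simp
    finally show "M1 = M2" .
  qed
  moreover have "image_mset g ` ?K' \<subseteq> ?K" using g by (fastforce simp: image_subset_iff)
  ultimately show ?thesis by (rule card_inj_on_le[OF _ _ finite_msets[OF assms(1)]])
qed


context SET begin

lemma mon_span:
  assumes b: "b \<in> F" and C: "C \<subseteq> S" and C': "C' \<subseteq> S" and CC: "C \<subseteq> span (C' \<union> F)"
  shows "set_mset M \<subseteq> C \<Longrightarrow> mon_act br b M \<in> span {mon_act br b N | N. set_mset N \<subseteq> C' \<and> size N \<le> size M}"
proof (induction M)
  case empty
  show ?case by (rule span_base) (use mon_act_empty in force)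
next
  case (add a M0)
  let ?G = "\<lambda>n. {mon_act br b N | N. set_mset N \<subseteq> C' \<and> size N \<le> n}"
  have a: "a \<in> S" "a \<in> span (C' \<union> F)" using add.prems C CC by auto
  have M0: "set_mset M0 \<subseteq> S" using add.prems C by auto
  have IH: "mon_act br b M0 \<in> span (?G (size M0))" using add by auto
  have base: "br g a \<in> span (?G (Suc (size M0)))" if g: "g \<in> ?G (size M0)" for g
  proof -
    obtain N where N: "g = mon_act br b N" "set_mset N \<subseteq> C'" "size N \<le> size M0" using g by blast
    have gF: "g \<in> F" using N mon_act_F b C' by auto
    from a(2) show ?thesis
    proof (induction rule: span_induct)
      case base
      show ?case using subspace_brR[OF subspace_span] by blast
    next
      case (step x)
      show ?case
      proof (cases "x \<in> C'")
        case True
        have xS: "x \<in> S" using True C' by auto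
        have NS: "set_mset N \<subseteq> S" using N(2) C' by auto
        have "br g x = mon_act br b (add_mset x N)"
          using mon_act_add[OF b xS NS] N(1) by simp
        moreover have "mon_act br b (add_mset x N) \<in> ?G (Suc (size M0))"
          using N True by fastforce
        ultimately show ?thesis by (simp add: span_base)
      next
        case False
        hence "x \<in> F" using step by auto
        hence "br g x = 0" using F_ab gF by auto
        thus ?thesis by (simp add: span_zero)
      qed
    qed
  qed
  have "br (mon_act br b M0) a \<in> span (?G (Suc (size M0)))"
    using IH
  proof (induction rule: span_induct)
    case base
    show ?case using subspace_brL[OF subspace_span] by blast
  next
    case (step x) thus ?case using base by auto
  qed
  moreover have "mon_act br b (add_mset a M0) = br (mon_act br b M0) a"
    using mon_act_add b a M0 by auto
  ultimately show ?case by simp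
qed

end


context LA begin

lemma mindep_inj:
  assumes md: "mindep scale br b C" and K: "\<And>M. M \<in> K \<Longrightarrow> set_mset M \<subseteq> C"
  shows "inj_on (mon_act br b) K"
proof
  fix M1 M2 assume M1: "M1 \<in> K" and M2: "M2 \<in> K" and eq: "mon_act br b M1 = mon_act br b M2"
  show "M1 = M2"
  proof (rule ccontr)
    assume ne: "M1 \<noteq> M2"
    let ?c = "\<lambda>M. if M = M1 then (1::'k) else -1"
    have "(\<Sum>M\<in>{M1, M2}. ?c M *s mon_act br b M) = mon_act br b M1 - mon_act br b M2"
      using ne by simp
    also have "\<dots> = 0" using eq by simp
    finally have "?c M1 = 0"
      using mindepD[OF md, of "{M1, M2}" ?c M1] K M1 M2 by auto
    thus False by simp
  qed
qed

lemma mindep_indep: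
  assumes md: "mindep scale br b C" and fK: "finite K" and K: "\<And>M. M \<in> K \<Longrightarrow> set_mset M \<subseteq> C"
  shows "independent (mon_act br b ` K)"
proof (rule independent_if_scalars_zero)
  show "finite (mon_act br b ` K)" using fK by simp
next
  fix f x assume s: "(\<Sum>x\<in>mon_act br b ` K. f x *s x) = 0" and x: "x \<in> mon_act br b ` K"
  have inj: "inj_on (mon_act br b) K" using mindep_inj md K by blast
  have "(\<Sum>M\<in>K. (f \<circ> mon_act br b) M *s mon_act br b M) = 0"
    using s sum.reindex[OF inj, of "\<lambda>x. f x *s x"] by simp
  moreover obtain M where M: "M \<in> K" "x = mon_act br b M" using x by blast
  ultimately have "(f \<circ> mon_act br b) M = 0"
    using mindepD[OF md fK, of "f \<circ> mon_act br b" M] K by blast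
  thus "f x = 0" using M by simp
qed

lemma indep_part:
  assumes inj: "inj_on g K'" and ind: "independent (g ` K')" and sub: "K0 \<subseteq> K'" and fK0: "finite K0"
    and s: "(\<Sum>M\<in>K0. c M *s g M) = 0" and M: "M \<in> K0"
  shows "c M = 0"
proof -
  have inj0: "inj_on g K0" using inj sub inj_on_subset by blast
  let ?u = "\<lambda>v. c (inv_into K0 g v)"
  have "(\<Sum>v\<in>g ` K0. ?u v *s v) = (\<Sum>M\<in>K0. ?u (g M) *s g M)"
    by (rule sum.reindex[OF inj0, of "\<lambda>v. ?u v *s v", unfolded comp_def])
  also have "\<dots> = (\<Sum>M\<in>K0. c M *s g M)"
    using inj0 by (intro sum.cong) (auto simp: inv_into_f_f)
  finally have z: "(\<Sum>v\<in>g ` K0. ?u v *s v) = 0" using s by simp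
  have "?u (g M) = 0"
    by (rule independentD[OF ind _ _ z]) (use fK0 sub M in auto)
  thus ?thesis using inj0 M by (simp add: inv_into_f_f)
qed

end

context SET begin

lemma core:
  assumes b: "b \<in> F" and fC: "finite C" and fC': "finite C'" and CS: "C \<subseteq> S" and C'S: "C' \<subseteq> S"
    and card: "card C' \<le> card C" and CC: "C \<subseteq> span (C' \<union> F)" and md: "mindep scale br b C"
  shows "mindep scale br b C'"
  unfolding mindep_def
proof (intro allI impI, elim conjE)
  fix K0 c assume fK0: "finite K0" and K0: "\<forall>M\<in>K0. set_mset M \<subseteq> C'"
    and s: "(\<Sum>M\<in>K0. c M *s mon_act br b M) = 0"
  define n where "n = (\<Sum>M\<in>K0. size M)"
  define K where "K = {M. set_mset M \<subseteq> C \<and> size M \<le> n}"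
  define K' where "K' = {M. set_mset M \<subseteq> C' \<and> size M \<le> n}"
  let ?f = "mon_act br b"
  have fK: "finite K" and fK': "finite K'" unfolding K_def K'_def using finite_msets fC fC' by auto
  have injK: "inj_on ?f K" by (rule mindep_inj[OF md]) (auto simp: K_def)
  have indK: "independent (?f ` K)" by (rule mindep_indep[OF md fK]) (auto simp: K_def)
  have spK: "?f ` K \<subseteq> span (?f ` K')"
  proof
    fix x assume "x \<in> ?f ` K"
    then obtain M where M: "M \<in> K" "x = ?f M" by blast
    have "x \<in> span {?f N | N. set_mset N \<subseteq> C' \<and> size N \<le> size M}"
      using mon_span[OF b CS C'S CC] M by (auto simp: K_def)
    moreover have "{?f N | N. set_mset N \<subseteq> C' \<and> size N \<le> size M} \<subseteq> ?f ` K'"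
      using M by (auto simp: K_def K'_def)
    ultimately show "x \<in> span (?f ` K')" using span_mono by blast
  qed
  obtain A where A: "A \<subseteq> ?f ` K'" "independent A" "?f ` K' \<subseteq> span A"
    using maximal_independent_subset by blast
  have fA: "finite A" using A(1) fK' finite_subset by blast
  have "span (?f ` K') \<subseteq> span A" using A(3) span_minimal subspace_span by blast
  hence "?f ` K \<subseteq> span A" using spK by blast
  hence c1: "card (?f ` K) \<le> card A" using independent_span_bound[OF fA indK] by blast
  have c2: "card A \<le> card (?f ` K')" using A(1) fK' by (simp add: card_mono)
  have c3: "card (?f ` K') \<le> card K'" using card_image_le fK' by blast
  have c4: "card K' \<le> card K" unfolding K_def K'_def by (rule card_msets_le[OF fC fC' card])
  have c5: "card (?f ` K) = card K" using card_image injK by blast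
  have "A = ?f ` K'" using card_subset_eq[OF _ A(1)] fK' c1 c2 c3 c4 c5 by simp
  hence indK': "independent (?f ` K')" using A(2) by simp
  have "card (?f ` K') = card K'" using c1 c2 c3 c4 c5 by simp
  hence injK': "inj_on ?f K'" using eq_card_imp_inj_on[OF fK'] by blast
  have sub: "K0 \<subseteq> K'"
  proof
    fix M assume M: "M \<in> K0"
    have "size M \<le> n" unfolding n_def using member_le_sum[OF M _ fK0, of size] by simp
    thus "M \<in> K'" using K0 M by (auto simp: K'_def)
  qed
  show "\<forall>M\<in>K0. c M = 0" using indep_part[OF injK' indK' sub fK0 s] by blast
qed

end


definition indep_mod :: "('k::field \<Rightarrow> 'v::ab_group_add \<Rightarrow> 'v) \<Rightarrow> 'v set \<Rightarrow> 'v set \<Rightarrow> bool" where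
  "indep_mod scale F B \<longleftrightarrow> (\<forall>B' c. finite B' \<and> B' \<subseteq> B \<and> (\<Sum>b\<in>B'. scale (c b) b) \<in> F \<longrightarrow> (\<forall>b\<in>B'. c b = 0))"

lemma basis_mod_iff: "basis_mod scale S F B \<longleftrightarrow> B \<subseteq> S \<and> indep_mod scale F B \<and> S \<subseteq> module.span scale (B \<union> F)"
  unfolding basis_mod_def indep_mod_def by blast

lemma indep_modD: "indep_mod scale F B \<Longrightarrow> finite B' \<Longrightarrow> B' \<subseteq> B \<Longrightarrow> (\<Sum>b\<in>B'. scale (c b) b) \<in> F \<Longrightarrow> b \<in> B' \<Longrightarrow> c b = 0"
  unfolding indep_mod_def by blast

lemma indep_mod_mono: "indep_mod scale F B \<Longrightarrow> B' \<subseteq> B \<Longrightarrow> indep_mod scale F B'"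
  unfolding indep_mod_def by blast

context LA begin

lemma ind_un:
  assumes F: "subspace F" and A: "indep_mod scale F A" and D: "independent D" and DF: "D \<subseteq> F"
  shows "independent (A \<union> D)" "A \<inter> D = {}"
proof -
  show AD: "A \<inter> D = {}"
  proof (rule ccontr)
    assume "A \<inter> D \<noteq> {}"
    then obtain a where a: "a \<in> A" "a \<in> D" by blast
    have "(\<Sum>x\<in>{a}. (\<lambda>_. (1::'k)) x *s x) \<in> F" using a DF by auto
    hence "(\<lambda>_. (1::'k)) a = 0" using indep_modD[OF A, of "{a}" "\<lambda>_. 1" a] a by auto
    thus False by simp
  qed
  show "independent (A \<union> D)"
    unfolding independent_explicit_finite_subsets
  proof (intro allI impI ballI)
    fix T u v assume T: "T \<subseteq> A \<union> D" and fT: "finite T" and s: "(\<Sum>v\<in>T. u v *s v) = 0" and v: "v \<in> T"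
    have split: "(\<Sum>v\<in>T. u v *s v) = (\<Sum>v\<in>T \<inter> A. u v *s v) + (\<Sum>v\<in>T - A. u v *s v)"
      by (rule sum.Int_Diff[OF fT])
    have TD: "T - A \<subseteq> D" using T by blast
    have inF: "(\<Sum>v\<in>T - A. u v *s v) \<in> F"
      using TD DF F by (intro subspace_sum[OF F] subspace_scale[OF F]) auto
    have eq: "(\<Sum>v\<in>T \<inter> A. u v *s v) = - (\<Sum>v\<in>T - A. u v *s v)"
      using s split by (simp add: eq_neg_iff_add_eq_0)
    have zA: "\<forall>w\<in>T \<inter> A. u w = 0"
      using indep_modD[OF A, of "T \<inter> A" u] fT eq inF subspace_neg[OF F] by auto
    hence "(\<Sum>v\<in>T \<inter> A. u v *s v) = 0" by simp
    hence sD: "(\<Sum>v\<in>T - A. u v *s v) = 0" using s split by simp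
    show "u v = 0"
    proof (cases "v \<in> A")
      case True thus ?thesis using zA v by blast
    next
      case False
      show ?thesis by (rule independentD[OF D _ TD sD]) (use fT v False in auto)
    qed
  qed
qed

end

context SET begin

lemma transfer:
  assumes b: "b \<in> F" and fB0: "finite B0" and B0S: "B0 \<subseteq> S" and md: "mindep scale br b B0"
    and fB1: "finite B1" and B1S: "B1 \<subseteq> S" and B1i: "indep_mod scale F B1" and B1sp: "B1 \<subseteq> span (B0 \<union> F)"
  shows "mindep scale br b B1"
proof -
  define V where "V = span (B0 \<union> B1)"
  obtain D where D: "D \<subseteq> F \<inter> V" "independent D" "F \<inter> V \<subseteq> span D"
    using maximal_independent_subset by blast
  have DF: "D \<subseteq> F" using D by blast
  have fD: "finite D"
    using independent_span_bound[of "B0 \<union> B1" D] fB0 fB1 D unfolding V_def by blast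
  have iu: "independent (B1 \<union> D)" "B1 \<inter> D = {}" using ind_un[OF F_sub B1i D(2) DF] by auto
  have spF: "span F = F" using F_sub by simp
  have B1D: "B1 \<subseteq> span (B0 \<union> D)"
  proof
    fix x assume x: "x \<in> B1"
    hence "x \<in> span (B0 \<union> F)" using B1sp by blast
    then obtain y z where yz: "x = y + z" "y \<in> span B0" "z \<in> F"
      unfolding span_Un spF by blast
    have xV: "x \<in> V" unfolding V_def using x by (simp add: span_base)
    have yV: "y \<in> V" unfolding V_def using yz(2) span_mono[of B0 "B0 \<union> B1"] by blast
    have "z = x - y" using yz by simp
    hence "z \<in> V" using xV yV unfolding V_def by (simp add: span_diff)
    hence "z \<in> span D" using D yz by blast
    hence "z \<in> span (B0 \<union> D)" using span_mono[of D "B0 \<union> D"] by blast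
    moreover have "y \<in> span (B0 \<union> D)" using yz(2) span_mono[of B0 "B0 \<union> D"] by blast
    ultimately show "x \<in> span (B0 \<union> D)" using yz(1) span_add by blast
  qed
  have "B1 \<union> D \<subseteq> span (B0 \<union> D)" using B1D span_superset[of "B0 \<union> D"] by blast
  then obtain E where E: "B1 \<union> D \<subseteq> E" "E \<subseteq> span (B0 \<union> D)" "independent E" "span (B0 \<union> D) \<subseteq> span E"
    using maximal_independent_subset_extend iu(1) by blast
  have fE: "finite E" and cE: "card E \<le> card (B0 \<union> D)"
    using independent_span_bound[OF _ E(3) E(2)] fB0 fD by auto
  define C' where "C' = E - D"
  have fC': "finite C'" unfolding C'_def using fE by blast
  have "card C' = card E - card D" unfolding C'_def using card_Diff_subset[OF fD] E(1) by blast
  moreover have "card (B0 \<union> D) \<le> card B0 + card D" by (rule card_Un_le)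
  ultimately have cC': "card C' \<le> card B0" using cE by linarith
  have spS: "span (B0 \<union> D) \<subseteq> S" using span_minimal[OF _ S_sub, of "B0 \<union> D"] B0S DF FS by blast
  have C'S: "C' \<subseteq> S" unfolding C'_def using E(2) spS by blast
  have "E \<subseteq> C' \<union> F" unfolding C'_def using DF by blast
  hence "span E \<subseteq> span (C' \<union> F)" by (rule span_mono)
  hence B0C': "B0 \<subseteq> span (C' \<union> F)" using E(4) span_superset[of "B0 \<union> D"] by blast
  have B1C': "B1 \<subseteq> C'" unfolding C'_def using E(1) iu(2) by blast
  have "mindep scale br b C'" by (rule core[OF b fB0 fC' B0S C'S cC' B0C' md])
  thus ?thesis using mindep_mono B1C' by blast
qed

end


context LA begin

lemma tf_iff: "torsion_free scale br F B \<longleftrightarrow> (\<forall>b\<in>F. b \<noteq> 0 \<longrightarrow> mindep scale br b B)"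
proof
  assume tf: "torsion_free scale br F B"
  show "\<forall>b\<in>F. b \<noteq> 0 \<longrightarrow> mindep scale br b B"
  proof (intro ballI impI)
    fix b assume bF: "b \<in> F" and b0: "b \<noteq> 0"
    show "mindep scale br b B" unfolding mindep_def
    proof (intro allI impI, elim conjE)
      fix K c assume fK: "finite K" and KB: "\<forall>M\<in>K. set_mset M \<subseteq> B"
        and s: "(\<Sum>M\<in>K. c M *s mon_act br b M) = 0"
      define g where "g = (\<lambda>M. if M \<in> K then c M else 0)"
      have fg: "finite {M. g M \<noteq> 0}" using fK by (rule rev_finite_subset) (auto simp: g_def split: if_splits)
      define f where "f = Abs_poly_mapping g"
      have lf: "Poly_Mapping.lookup f = g" unfolding f_def using fg by simp
      have keys: "Poly_Mapping.keys f = {M \<in> K. c M \<noteq> 0}"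
        by (auto simp: in_keys_iff lf g_def split: if_splits)
      have "poly_act scale br b f = (\<Sum>M\<in>{M \<in> K. c M \<noteq> 0}. c M *s mon_act br b M)"
        unfolding poly_act_def keys by (intro sum.cong) (auto simp: lf g_def)
      also have "\<dots> = (\<Sum>M\<in>K. c M *s mon_act br b M)"
        using fK by (intro sum.mono_neutral_left) auto
      finally have pa: "poly_act scale br b f = 0" using s by simp
      show "\<forall>M\<in>K. c M = 0"
      proof (rule ccontr)
        assume "\<not> (\<forall>M\<in>K. c M = 0)"
        then obtain M where "M \<in> K" "c M \<noteq> 0" by blast
        hence "M \<in> Poly_Mapping.keys f" using keys by blast
        hence "f \<noteq> 0" by auto
        moreover have "\<forall>M\<in>Poly_Mapping.keys f. set_mset M \<subseteq> B" using keys KB by blast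
        ultimately have "b = 0" using tf bF pa unfolding torsion_free_def by blast
        thus False using b0 by simp
      qed
    qed
  qed
next
  assume md: "\<forall>b\<in>F. b \<noteq> 0 \<longrightarrow> mindep scale br b B"
  show "torsion_free scale br F B" unfolding torsion_free_def
  proof (intro ballI allI impI, elim conjE)
    fix b f assume bF: "b \<in> F" and f0: "f \<noteq> (0::'v multiset \<Rightarrow>\<^sub>0 'k)"
      and kB: "\<forall>M\<in>Poly_Mapping.keys f. set_mset M \<subseteq> B" and pa: "poly_act scale br b f = 0"
    show "b = 0"
    proof (rule ccontr)
      assume b0: "b \<noteq> 0"
      have z: "\<forall>M\<in>Poly_Mapping.keys f. Poly_Mapping.lookup f M = 0"
      proof
        fix M assume M: "M \<in> Poly_Mapping.keys f"
        show "Poly_Mapping.lookup f M = 0"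
          by (rule mindepD[OF md[rule_format, OF bF b0], where K="Poly_Mapping.keys f" and c="Poly_Mapping.lookup f"])
            (use pa kB M in \<open>auto simp: poly_act_def\<close>)
      qed
      have "Poly_Mapping.keys f = {}" using z in_keys_iff by blast
      thus False using f0 by simp
    qed
  qed
qed

lemma mindep_empty: "b \<noteq> 0 \<Longrightarrow> mindep scale br b {}"
  unfolding mindep_def
proof (intro allI impI, elim conjE)
  fix K c assume b: "b \<noteq> 0" and fK: "finite K" and KB: "\<forall>M\<in>K. set_mset M \<subseteq> {}"
    and s: "(\<Sum>M\<in>K. c M *s mon_act br b M) = 0"
  show "\<forall>M\<in>K. c M = 0"
  proof
    fix M assume M: "M \<in> K"
    have "K \<subseteq> {{#}}" using KB by auto
    hence K: "K = {{#}}" using M by blast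
    hence "M = {#}" using M by simp
    have "c {#} *s b = 0" using s K by simp
    thus "c M = 0" using b \<open>M = {#}\<close> by simp
  qed
qed

lemma basis_mod_exists:
  assumes S: "subspace S" and F: "subspace F" and FS: "F \<subseteq> S"
  shows "\<exists>B. basis_mod scale S F B"
proof -
  obtain D where D: "D \<subseteq> F" "independent D" "F \<subseteq> span D" using maximal_independent_subset by blast
  obtain E where E: "D \<subseteq> E" "E \<subseteq> S" "independent E" "S \<subseteq> span E"
    using maximal_independent_subset_extend[of D S] D FS by blast
  define B where "B = E - D"
  have "S \<subseteq> span (B \<union> F)"
  proof -
    have "E \<subseteq> B \<union> F" unfolding B_def using D by blast
    thus ?thesis using E(4) span_mono by blast
  qed
  moreover have "B \<subseteq> S" unfolding B_def using E by blast
  moreover have "indep_mod scale F B" unfolding indep_mod_def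
  proof (intro allI impI ballI, elim conjE)
    fix B' c x assume fB': "finite B'" and B'B: "B' \<subseteq> B" and sF: "(\<Sum>b\<in>B'. c b *s b) \<in> F" and x: "x \<in> B'"
    have "(\<Sum>b\<in>B'. c b *s b) \<in> span D" using sF D by blast
    then obtain t r where t: "finite t" "t \<subseteq> D" "(\<Sum>b\<in>B'. c b *s b) = (\<Sum>a\<in>t. r a *s a)"
      unfolding span_explicit by blast
    have disj: "B' \<inter> t = {}" using B'B t(2) unfolding B_def by blast
    define w where "w = (\<lambda>a. if a \<in> B' then c a else - r a)"
    have "(\<Sum>a\<in>B' \<union> t. w a *s a) = (\<Sum>a\<in>B'. w a *s a) + (\<Sum>a\<in>t. w a *s a)"
      by (rule sum.union_disjoint[OF fB' t(1) disj])
    also have "(\<Sum>a\<in>B'. w a *s a) = (\<Sum>a\<in>B'. c a *s a)" by (simp add: w_def)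
    also have "(\<Sum>a\<in>t. w a *s a) = (\<Sum>a\<in>t. (- r a) *s a)"
      using disj by (intro sum.cong) (auto simp: w_def)
    also have "\<dots> = - (\<Sum>a\<in>t. r a *s a)" by (simp add: sum_negf)
    finally have z: "(\<Sum>a\<in>B' \<union> t. w a *s a) = 0" using t(3) by simp
    have "w x = 0"
      by (rule independentD[OF E(3) _ _ z]) (use fB' t B'B E(1) x in \<open>auto simp: B_def\<close>)
    thus "c x = 0" using x by (simp add: w_def)
  qed
  ultimately show ?thesis unfolding basis_mod_iff by blast
qed

lemma finspan1: "x \<in> span (B \<union> F) \<Longrightarrow> \<exists>B0. finite B0 \<and> B0 \<subseteq> B \<and> x \<in> span (B0 \<union> F)"
proof -
  assume "x \<in> span (B \<union> F)"
  then obtain t r where t: "finite t" "t \<subseteq> B \<union> F" "x = (\<Sum>a\<in>t. r a *s a)"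
    unfolding span_explicit by blast
  have "x \<in> span t" using t(3) by (simp add: span_sum span_scale span_base)
  moreover have "span t \<subseteq> span ((t \<inter> B) \<union> F)" using t(2) by (intro span_mono) blast
  ultimately show ?thesis using t(1) by (intro exI[of _ "t \<inter> B"]) auto
qed

lemma finspan: "finite X \<Longrightarrow> X \<subseteq> span (B \<union> F) \<Longrightarrow> \<exists>B0. finite B0 \<and> B0 \<subseteq> B \<and> X \<subseteq> span (B0 \<union> F)"
proof (induction X rule: finite_induct)
  case empty thus ?case by auto
next
  case (insert x X)
  obtain B1 where B1: "finite B1" "B1 \<subseteq> B" "X \<subseteq> span (B1 \<union> F)" using insert by auto
  obtain B2 where B2: "finite B2" "B2 \<subseteq> B" "x \<in> span (B2 \<union> F)" using finspan1[of x B F] insert by auto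
  have "span (B1 \<union> F) \<subseteq> span (B1 \<union> B2 \<union> F)" "span (B2 \<union> F) \<subseteq> span (B1 \<union> B2 \<union> F)"
    by (intro span_mono; blast)+
  thus ?case using B1 B2 by (intro exI[of _ "B1 \<union> B2"]) auto
qed

end


context LA begin

lemma lie_idealI: "subspace I \<Longrightarrow> I \<subseteq> S \<Longrightarrow> (\<And>x y. x \<in> I \<Longrightarrow> y \<in> S \<Longrightarrow> br x y \<in> I) \<Longrightarrow> lie_ideal scale br S I"
  unfolding lie_ideal_def by blast

lemma lie_idealD: "lie_ideal scale br S I \<Longrightarrow> x \<in> I \<Longrightarrow> y \<in> S \<Longrightarrow> br x y \<in> I"
  unfolding lie_ideal_def by blast

lemma lie_subalgI: "subspace S \<Longrightarrow> (\<And>x y. x \<in> S \<Longrightarrow> y \<in> S \<Longrightarrow> br x y \<in> S) \<Longrightarrow> lie_subalg scale br S"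
  unfolding lie_subalg_def by blast

lemma lie_subalgD: "lie_subalg scale br S \<Longrightarrow> x \<in> S \<Longrightarrow> y \<in> S \<Longrightarrow> br x y \<in> S"
  unfolding lie_subalg_def by blast

lemma subalg_ideal_self: "lie_subalg scale br S \<Longrightarrow> lie_ideal scale br S S"
  unfolding lie_subalg_def lie_ideal_def by blast

lemma ideal_gen_ideal:
  assumes S: "lie_subalg scale br S" and X: "X \<subseteq> S"
  shows "lie_ideal scale br S (ideal_gen scale br S X)"
  unfolding ideal_gen_def
proof (rule lie_idealI)
  let ?A = "{J. lie_ideal scale br S J \<and> X \<subseteq> J}"
  have SA: "S \<in> ?A" using S X subalg_ideal_self by blast
  show "subspace (\<Inter>?A)" by (rule subspace_Inter) (auto simp: lie_ideal_def)
  show "\<Inter>?A \<subseteq> S" using SA by blast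
  fix x y assume x: "x \<in> \<Inter>?A" and y: "y \<in> S"
  show "br x y \<in> \<Inter>?A"
  proof
    fix J assume J: "J \<in> ?A"
    hence "x \<in> J" using x by blast
    thus "br x y \<in> J" using J y lie_idealD by blast
  qed
qed

lemma ideal_gen_least: "lie_ideal scale br S J \<Longrightarrow> X \<subseteq> J \<Longrightarrow> ideal_gen scale br S X \<subseteq> J"
  unfolding ideal_gen_def by blast

lemma ideal_gen_sup: "X \<subseteq> ideal_gen scale br S X"
  unfolding ideal_gen_def by blast

lemma zero_lcs: "subspace J \<Longrightarrow> 0 \<in> lcs scale br J n"
  by (cases n) (auto simp: subspace_0 span_zero)

lemma abelian_nil:
  assumes I: "subspace I" and ab: "lie_abelian br I"
  shows "lie_nilpotent scale br I"
proof -
  have "{br x y | x y. x \<in> lcs scale br I 0 \<and> y \<in> I} \<subseteq> {0}" using ab by (auto simp: lie_abelian_def)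
  hence "lcs scale br I (Suc 0) \<subseteq> {0}" using span_minimal[OF _ subspace_single_0] by simp
  hence "lcs scale br I (Suc 0) = {0}" using zero_lcs[OF I, of "Suc 0"] by auto
  thus ?thesis unfolding lie_nilpotent_def by blast
qed

lemma nil_fit: "lie_ideal scale br S I \<Longrightarrow> lie_nilpotent scale br I \<Longrightarrow> I \<subseteq> fit scale br S"
proof -
  assume "lie_ideal scale br S I" "lie_nilpotent scale br I"
  hence "I \<subseteq> \<Union>{I. lie_ideal scale br S I \<and> lie_nilpotent scale br I}" by blast
  thus ?thesis unfolding fit_def using ideal_gen_sup by blast
qed

lemma NilU_sub: "\<Union>{I. lie_ideal scale br S I \<and> lie_nilpotent scale br I} \<subseteq> S"
  unfolding lie_ideal_def by blast

lemma fit_ideal: "lie_subalg scale br S \<Longrightarrow> lie_ideal scale br S (fit scale br S)"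
  unfolding fit_def by (rule ideal_gen_ideal[OF _ NilU_sub])

lemma fit_sub_span:
  assumes S: "lie_subalg scale br S"
  shows "fit scale br S \<subseteq> span (\<Union>{I. lie_ideal scale br S I \<and> lie_nilpotent scale br I})"
proof -
  let ?U = "\<Union>{I. lie_ideal scale br S I \<and> lie_nilpotent scale br I}"
  have "lie_ideal scale br S (span ?U)"
  proof (rule lie_idealI)
    show "subspace (span ?U)" by simp
    show "span ?U \<subseteq> S" using span_minimal[OF NilU_sub] S unfolding lie_subalg_def by blast
  next
    fix x y assume x: "x \<in> span ?U" and y: "y \<in> S"
    from x show "br x y \<in> span ?U"
    proof (induction rule: span_induct)
      case base show ?case using subspace_brL[OF subspace_span] by blast
    next
      case (step e)
      then obtain I where I: "lie_ideal scale br S I" "lie_nilpotent scale br I" "e \<in> I" by blast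
      hence "br e y \<in> I" using y unfolding lie_ideal_def by blast
      thus ?case using I by (intro span_base) blast
    qed
  qed
  moreover have "?U \<subseteq> span ?U" by (rule span_superset)
  ultimately show ?thesis unfolding fit_def by (rule ideal_gen_least)
qed

lemma lcs_mono: "J \<subseteq> I \<Longrightarrow> lcs scale br J n \<subseteq> lcs scale br I n"
proof (induction n)
  case 0 thus ?case by simp
next
  case (Suc n)
  have "{br x y | x y. x \<in> lcs scale br J n \<and> y \<in> J} \<subseteq> {br x y | x y. x \<in> lcs scale br I n \<and> y \<in> I}"
    using Suc by blast
  thus ?case by (simp add: span_mono)
qed

lemma nil_sub: "subspace J \<Longrightarrow> J \<subseteq> I \<Longrightarrow> lie_nilpotent scale br I \<Longrightarrow> lie_nilpotent scale br J"
  unfolding lie_nilpotent_def using lcs_mono zero_lcs by blast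

lemma ideal_inter:
  assumes I: "lie_ideal scale br S I" and H: "lie_subalg scale br H" and HS: "H \<subseteq> S"
  shows "lie_ideal scale br H (I \<inter> H)"
  using I H HS unfolding lie_ideal_def lie_subalg_def by (auto intro: subspace_inter)

lemma UNIV_subalg: "lie_subalg scale br UNIV"
  unfolding lie_subalg_def by simp

lemma gen_subalg: "lie_subalg scale br (lie_gen scale br X)"
  unfolding lie_gen_def
proof (rule lie_subalgI)
  let ?A = "{T. lie_subalg scale br T \<and> X \<subseteq> T}"
  show "subspace (\<Inter>?A)" by (rule subspace_Inter) (auto simp: lie_subalg_def)
  fix x y assume x: "x \<in> \<Inter>?A" and y: "y \<in> \<Inter>?A"
  show "br x y \<in> \<Inter>?A"
  proof
    fix T assume T: "T \<in> ?A"
    hence "x \<in> T" "y \<in> T" using x y by blast+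
    thus "br x y \<in> T" using T lie_subalgD by blast
  qed
qed

lemma gen_sup: "X \<subseteq> lie_gen scale br X"
  unfolding lie_gen_def by blast

lemma subalg_sub: "lie_subalg scale br S \<Longrightarrow> subspace S"
  unfolding lie_subalg_def by blast

end

locale MLA = LA + assumes metab: "br (br a b) (br c d) = 0"
begin

lemma sq_fit:
  assumes S: "lie_subalg scale br S" and x: "x \<in> S" and y: "y \<in> S"
  shows "br x y \<in> fit scale br S"
proof -
  let ?J = "span {br a b | a b. a \<in> S \<and> b \<in> S}"
  have JS: "?J \<subseteq> S" using S by (intro span_minimal) (auto simp: lie_subalg_def)
  have id: "lie_ideal scale br S ?J"
  proof (rule lie_idealI)
    show "subspace ?J" by simp
    show "?J \<subseteq> S" by (rule JS)
  next
    fix u v assume u: "u \<in> ?J" and v: "v \<in> S"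
    from u show "br u v \<in> ?J"
    proof (induction rule: span_induct)
      case base show ?case using subspace_brL[OF subspace_span] by blast
    next
      case (step e)
      then obtain a b where e: "e = br a b" "a \<in> S" "b \<in> S" by blast
      hence "e \<in> S" using S by (auto simp: lie_subalg_def)
      thus ?case using v by (intro span_base) blast
    qed
  qed
  have ab: "lie_abelian br ?J"
    unfolding lie_abelian_def
  proof (intro ballI)
    fix u w assume u: "u \<in> ?J" and w: "w \<in> ?J"
    from u show "br u w = 0"
    proof (induction rule: span_induct)
      case base show ?case using subspace_brL[OF subspace_single_0] by simp
    next
      case (step e)
      then obtain a b where e: "e = br a b" by blast
      from w show ?case
      proof (induction rule: span_induct)
        case base show ?case using subspace_brR[OF subspace_single_0] by simp
      next
        case (step e')
        then obtain c d where "e' = br c d" by blast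
        thus ?case using e metab by simp
      qed
    qed
  qed
  have "?J \<subseteq> fit scale br S" using nil_fit[OF id abelian_nil[OF _ ab]] by simp
  moreover have "br x y \<in> ?J" using x y by (intro span_base) blast
  ultimately show ?thesis by blast
qed

lemma SET_of:
  assumes S: "lie_subalg scale br S" and ab: "lie_abelian br (fit scale br S)"
  shows "SET scale br S (fit scale br S)"
proof -
  have id: "lie_ideal scale br S (fit scale br S)" by (rule fit_ideal[OF S])
  have i1: "subspace (fit scale br S)" and i2: "fit scale br S \<subseteq> S"
    using id unfolding lie_ideal_def by blast+
  show ?thesis
  proof (unfold_locales)
    show "subspace S" by (rule subalg_sub[OF S])
    show "subspace (fit scale br S)" by (rule i1)
    show "fit scale br S \<subseteq> S" by (rule i2)
    show "\<And>x y. x \<in> fit scale br S \<Longrightarrow> y \<in> S \<Longrightarrow> br x y \<in> fit scale br S"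
      by (rule lie_idealD[OF id])
    show "\<And>x y. x \<in> fit scale br S \<Longrightarrow> y \<in> fit scale br S \<Longrightarrow> br x y = 0"
      using ab unfolding lie_abelian_def by blast
    show "\<And>x y. x \<in> S \<Longrightarrow> y \<in> S \<Longrightarrow> br x y \<in> fit scale br S"
      by (rule sq_fit[OF S])
  qed
qed

end


context LA begin

lemma dimlt:
  assumes Z1: "subspace Z1" and Z2: "subspace Z2" and sub: "Z1 \<subseteq> Z2" and Z2B: "Z2 \<subseteq> span B0"
    and fB0: "finite B0" and u2: "u \<in> Z2" and u1: "u \<notin> Z1"
  shows "dim Z1 < dim Z2"
proof -
  obtain A1 where A1: "A1 \<subseteq> Z1" "independent A1" "Z1 \<subseteq> span A1" "card A1 = dim Z1"
    using basis_exists by blast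
  obtain A2 where A2: "A2 \<subseteq> Z2" "independent A2" "Z2 \<subseteq> span A2" "card A2 = dim Z2"
    using basis_exists by blast
  have fA2: "finite A2" using independent_span_bound[OF fB0 A2(2)] A2(1) Z2B by blast
  have fA1: "finite A1" using independent_span_bound[OF fB0 A1(2)] A1(1) sub Z2B by blast
  have "span A1 \<subseteq> Z1" using span_minimal[OF A1(1) Z1] .
  hence uA1: "u \<notin> span A1" using u1 by blast
  have ind: "independent (insert u A1)" by (rule independent_insertI[OF uA1 A1(2)])
  have "insert u A1 \<subseteq> span A2" using u2 A1(1) sub A2(3) by blast
  hence "card (insert u A1) \<le> card A2" using independent_span_bound[OF fA2 ind] by blast
  moreover have "u \<notin> A1" using uA1 span_superset by blast
  ultimately have "Suc (card A1) \<le> card A2" using fA1 by simp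
  thus ?thesis using A1(4) A2(4) by simp
qed

lemma span_indep_zero:
  assumes fB0: "finite B0" and ind: "indep_mod scale F B0" and u: "u \<in> span B0" and uF: "u \<in> F"
  shows "u = 0"
proof -
  obtain c where c: "u = (\<Sum>v\<in>B0. c v *s v)" using u unfolding span_finite[OF fB0] by blast
  have "\<forall>v\<in>B0. c v = 0" using indep_modD[OF ind fB0 order_refl, of c] c uF by blast
  thus ?thesis using c by simp
qed

lemma nil_elem:
  assumes e: "e \<in> \<Union>{I. lie_ideal scale br UNIV I \<and> lie_nilpotent scale br I}"
    and H: "lie_subalg scale br H" and eH: "e \<in> H"
  shows "e \<in> fit scale br H"
proof -
  obtain I where I: "lie_ideal scale br UNIV I" "lie_nilpotent scale br I" "e \<in> I" using e by blast
  have id: "lie_ideal scale br H (I \<inter> H)" by (rule ideal_inter[OF I(1) H subset_UNIV])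
  have "subspace (I \<inter> H)" using id unfolding lie_ideal_def by blast
  hence "lie_nilpotent scale br (I \<inter> H)" using nil_sub I(2) by blast
  hence "I \<inter> H \<subseteq> fit scale br H" using nil_fit id by blast
  thus ?thesis using I(3) eH by blast
qed

end

context MLA begin

lemma cent:
  assumes ab: "lie_abelian br (fit scale br UNIV)" and u: "\<forall>m\<in>fit scale br UNIV. br m u = 0"
  shows "u \<in> fit scale br UNIV"
proof -
  let ?F = "fit scale br UNIV"
  have idF: "lie_ideal scale br UNIV ?F" by (rule fit_ideal[OF UNIV_subalg])
  have Fs: "subspace ?F" using idF unfolding lie_ideal_def by blast
  define J where "J = {t *s u + f | t f. f \<in> ?F}"
  have sJ: "subspace J" unfolding subspace_def J_def
  proof (intro conjI ballI allI)
    have "0 *s u + 0 \<in> {t *s u + f | t f. f \<in> ?F}" using subspace_0[OF Fs] by blast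
    thus "0 \<in> {t *s u + f | t f. f \<in> ?F}" by simp
  next
    fix x y assume x: "x \<in> {t *s u + f | t f. f \<in> ?F}" and y: "y \<in> {t *s u + f | t f. f \<in> ?F}"
    then obtain t f t' f' where "x = t *s u + f" "f \<in> ?F" "y = t' *s u + f'" "f' \<in> ?F" by blast
    thus "x + y \<in> {t *s u + f | t f. f \<in> ?F}"
      using subspace_add[OF Fs] by (intro CollectI exI[of _ "t + t'"] exI[of _ "f + f'"])
        (simp add: scale_left_distrib algebra_simps)
  next
    fix c x assume x: "x \<in> {t *s u + f | t f. f \<in> ?F}"
    then obtain t f where "x = t *s u + f" "f \<in> ?F" by blast
    thus "c *s x \<in> {t *s u + f | t f. f \<in> ?F}"
      using subspace_scale[OF Fs] by (intro CollectI exI[of _ "c * t"] exI[of _ "c *s f"])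
        (simp add: scale_right_distrib)
  qed
  have idJ: "lie_ideal scale br UNIV J"
  proof (rule lie_idealI[OF sJ subset_UNIV])
    fix x y assume x: "x \<in> J"
    then obtain t f where tf: "x = t *s u + f" "f \<in> ?F" unfolding J_def by blast
    have "br x y = t *s br u y + br f y" using tf by (simp add: addL scL)
    moreover have "t *s br u y + br f y \<in> ?F"
      using sq_fit[OF UNIV_subalg] lie_idealD[OF idF tf(2)] subspace_add[OF Fs] subspace_scale[OF Fs]
      by blast
    ultimately have "br x y = 0 *s u + (t *s br u y + br f y)" "t *s br u y + br f y \<in> ?F" by simp_all
    thus "br x y \<in> J" unfolding J_def by blast
  qed
  have abJ: "lie_abelian br J" unfolding lie_abelian_def
  proof (intro ballI)
    fix x y assume "x \<in> J" "y \<in> J"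
    then obtain t f t' f' where tf: "x = t *s u + f" "f \<in> ?F" "y = t' *s u + f'" "f' \<in> ?F"
      unfolding J_def by blast
    have "br u f' = 0" using u tf(4) anti by (metis neg_equal_0_iff_equal)
    moreover have "br f u = 0" using u tf(2) by blast
    moreover have "br f f' = 0" using ab tf unfolding lie_abelian_def by blast
    ultimately show "br x y = 0" using tf by (simp add: addL addR scL scR alt)
  qed
  have "J \<subseteq> ?F" by (rule nil_fit[OF idJ abelian_nil[OF sJ abJ]])
  moreover have "1 *s u + 0 \<in> J" unfolding J_def using subspace_0[OF Fs] by blast
  hence "u \<in> J" by simp
  ultimately show ?thesis by blast
qed

lemma mindim:
  assumes ab: "lie_abelian br (fit scale br UNIV)" and fB0: "finite B0" and ind: "indep_mod scale (fit scale br UNIV) B0"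
  shows "\<exists>M. finite M \<and> M \<subseteq> fit scale br UNIV \<and> (\<forall>u\<in>span B0. (\<forall>m\<in>M. br m u = 0) \<longrightarrow> u = 0)"
proof -
  let ?F = "fit scale br UNIV"
  define Z where "Z = (\<lambda>M. {u \<in> span B0. \<forall>m\<in>M. br m u = 0})"
  have sZ: "subspace (Z M)" for M
    unfolding subspace_def Z_def by (auto simp: span_zero span_add span_scale addR scR)
  obtain M where M: "finite M \<and> M \<subseteq> ?F" and Mmin: "\<And>M'. finite M' \<and> M' \<subseteq> ?F \<Longrightarrow> dim (Z M) \<le> dim (Z M')"
    using ex_has_least_nat[of "\<lambda>M. finite M \<and> M \<subseteq> ?F" "{}" "\<lambda>M. dim (Z M)"] by auto
  show ?thesis
  proof (intro exI[of _ M] conjI)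
    show "finite M" "M \<subseteq> ?F" using M by auto
    show "\<forall>u\<in>span B0. (\<forall>m\<in>M. br m u = 0) \<longrightarrow> u = 0"
    proof (intro ballI impI, rule ccontr)
      fix u assume u: "u \<in> span B0" and uM: "\<forall>m\<in>M. br m u = 0" and u0: "u \<noteq> 0"
      have "u \<notin> ?F" using span_indep_zero[OF fB0 ind u] u0 by blast
      then obtain m where m: "m \<in> ?F" "br m u \<noteq> 0" using cent[OF ab] by blast
      have "dim (Z (insert m M)) < dim (Z M)"
      proof (rule dimlt[OF sZ sZ _ _ fB0])
        show "Z (insert m M) \<subseteq> Z M" unfolding Z_def by blast
        show "Z M \<subseteq> span B0" unfolding Z_def by blast
        show "u \<in> Z M" unfolding Z_def using u uM by blast
        show "u \<notin> Z (insert m M)" unfolding Z_def using m by blast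
      qed
      moreover have "dim (Z M) \<le> dim (Z (insert m M))" using Mmin M m by blast
      ultimately show False by simp
    qed
  qed
qed

end


context MLA begin

lemma forward:
  assumes U: "U_algebra scale br UNIV" and H: "lie_subalg scale br H"
  shows "U_algebra scale br H"
proof -
  let ?F = "fit scale br UNIV"
  have ab: "lie_abelian br ?F" using U unfolding U_algebra_def by blast
  obtain B where bm: "basis_mod scale UNIV ?F B" and tf: "torsion_free scale br ?F B"
    using U unfolding U_algebra_def by blast
  interpret A: SET scale br UNIV ?F by (rule SET_of[OF UNIV_subalg ab])
  have idA: "lie_ideal scale br UNIV ?F" by (rule fit_ideal[OF UNIV_subalg])
  have HI: "lie_ideal scale br H (?F \<inter> H)" by (rule ideal_inter[OF idA H subset_UNIV])
  have sHI: "subspace (?F \<inter> H)" using HI unfolding lie_ideal_def by blast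
  have abHI: "lie_abelian br (?F \<inter> H)" using ab unfolding lie_abelian_def by blast
  have HIsub: "?F \<inter> H \<subseteq> fit scale br H" by (rule nil_fit[OF HI abelian_nil[OF sHI abHI]])
  have idH: "lie_ideal scale br H (fit scale br H)" by (rule fit_ideal[OF H])
  have fHsub: "subspace (fit scale br H)" and fHH: "fit scale br H \<subseteq> H"
    using idH unfolding lie_ideal_def by blast+
  have Hs: "subspace H" by (rule subalg_sub[OF H])
  show ?thesis
  proof (cases "?F \<inter> H \<subseteq> {0}")
    case True
    have habel: "lie_abelian br H" unfolding lie_abelian_def
    proof (intro ballI)
      fix x y assume x: "x \<in> H" and y: "y \<in> H"
      have "br x y \<in> ?F" using sq_fit[OF UNIV_subalg] by blast
      moreover have "br x y \<in> H" using lie_subalgD[OF H x y] .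
      ultimately show "br x y = 0" using True by blast
    qed
    have "H \<subseteq> fit scale br H" by (rule nil_fit[OF subalg_ideal_self[OF H] abelian_nil[OF Hs habel]])
    hence fitH: "fit scale br H = H" using fHH by blast
    have "basis_mod scale H H {}" unfolding basis_mod_iff indep_mod_def using span_superset[of H] by auto
    moreover have "torsion_free scale br H {}" unfolding tf_iff using mindep_empty by blast
    ultimately show ?thesis unfolding U_algebra_def fitH using habel by blast
  next
    case False
    then obtain b0 where b0: "b0 \<in> ?F" "b0 \<in> H" "b0 \<noteq> 0" by blast
    have mdB: "mindep scale br b0 B" using tf b0 unfolding tf_iff by blast
    have Bsp: "UNIV \<subseteq> span (B \<union> ?F)" using bm unfolding basis_mod_iff by blast
    have NilH: "\<Union>{I. lie_ideal scale br H I \<and> lie_nilpotent scale br I} \<subseteq> ?F \<inter> H"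
    proof
      fix u assume "u \<in> \<Union>{I. lie_ideal scale br H I \<and> lie_nilpotent scale br I}"
      then obtain I where I: "lie_ideal scale br H I" "lie_nilpotent scale br I" "u \<in> I" by blast
      have uH: "u \<in> H" using I unfolding lie_ideal_def by blast
      have sI: "subspace I" using I unfolding lie_ideal_def by blast
      have "u \<in> ?F"
      proof (rule ccontr)
        assume uF: "u \<notin> ?F"
        obtain B0 where B0: "finite B0" "B0 \<subseteq> B" "u \<in> span (B0 \<union> ?F)"
          using finspan1[of u B ?F] Bsp by blast
        have md0: "mindep scale br b0 B0" using mindep_mono[OF mdB B0(2)] .
        have indu: "indep_mod scale ?F {u}" unfolding indep_mod_def
        proof (intro allI impI ballI, elim conjE)
          fix B' c x assume "finite B'" "B' \<subseteq> {u}" and s: "(\<Sum>b\<in>B'. c b *s b) \<in> ?F" and x: "x \<in> B'"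
          hence B': "B' = {u}" "x = u" by auto
          have cu: "c u *s u \<in> ?F" using s B' by simp
          show "c x = 0"
          proof (rule ccontr)
            assume "c x \<noteq> 0"
            hence "inverse (c u) *s (c u *s u) = u" using B' by simp
            moreover have "inverse (c u) *s (c u *s u) \<in> ?F" using subspace_scale[OF A.F_sub cu] by blast
            ultimately show False using uF by simp
          qed
        qed
        have mdu: "mindep scale br b0 {u}"
          by (rule A.transfer[OF b0(1) B0(1) subset_UNIV md0 _ subset_UNIV indu]) (use B0(3) in auto)
        have iter: "mon_act br b0 (replicate_mset (Suc n) u) \<in> lcs scale br I n" for n
        proof (induction n)
          case 0
          have "mon_act br b0 (replicate_mset (Suc 0) u) = br b0 u"
            using A.mon_act_add[OF b0(1), of u "{#}"] by simp
          also have "\<dots> = - br u b0" by (rule anti)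
          finally show ?case using lie_idealD[OF I(1) I(3) b0(2)] subspace_neg[OF sI] by simp
        next
          case (Suc n)
          have "mon_act br b0 (replicate_mset (Suc (Suc n)) u) = br (mon_act br b0 (replicate_mset (Suc n) u)) u"
            using A.mon_act_add[OF b0(1), of u "replicate_mset (Suc n) u"] by simp
          thus ?case using Suc I(3) by (auto intro: span_base)
        qed
        obtain N where N: "lcs scale br I N = {0}" using I(2) unfolding lie_nilpotent_def by blast
        have z: "mon_act br b0 (replicate_mset (Suc N) u) = 0" using iter[of N] N by blast
        let ?R = "replicate_mset (Suc N) u"
        have sub: "\<And>M. M \<in> {?R} \<Longrightarrow> set_mset M \<subseteq> {u}" by auto
        have sm: "(\<Sum>M\<in>{?R}. (\<lambda>_. 1) M *s mon_act br b0 M) = 0" using z by simp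
        show False using mindepD[OF mdu _ sub sm] by simp
      qed
      thus "u \<in> ?F \<inter> H" using uH by blast
    qed
    have fitH: "fit scale br H = ?F \<inter> H"
      using ideal_gen_least[OF HI NilH] HIsub unfolding fit_def by blast
    have abH: "lie_abelian br (fit scale br H)" using abHI fitH by simp
    obtain BH where BH: "basis_mod scale H (fit scale br H) BH"
      using basis_mod_exists[OF Hs fHsub fHH] by blast
    have BHH: "BH \<subseteq> H" and indBH: "indep_mod scale (fit scale br H) BH"
      using BH unfolding basis_mod_iff by blast+
    have "torsion_free scale br (fit scale br H) BH" unfolding tf_iff
    proof (intro ballI impI)
      fix b assume bH: "b \<in> fit scale br H" and b0: "b \<noteq> 0"
      have bF: "b \<in> ?F" using bH fitH by blast
      show "mindep scale br b BH" unfolding mindep_def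
      proof (intro allI impI, elim conjE)
        fix K c assume fK: "finite K" and KB: "\<forall>M\<in>K. set_mset M \<subseteq> BH"
          and s: "(\<Sum>M\<in>K. c M *s mon_act br b M) = 0"
        define B1 where "B1 = \<Union>(set_mset ` K)"
        have fB1: "finite B1" unfolding B1_def using fK by simp
        have B1BH: "B1 \<subseteq> BH" unfolding B1_def using KB by blast
        have indB1: "indep_mod scale ?F B1" unfolding indep_mod_def
        proof (intro allI impI ballI, elim conjE)
          fix B' c' x assume fB': "finite B'" and B'B: "B' \<subseteq> B1" and sF: "(\<Sum>b\<in>B'. c' b *s b) \<in> ?F"
            and x: "x \<in> B'"
          have "(\<Sum>b\<in>B'. c' b *s b) \<in> H"
            using B'B B1BH BHH by (intro subspace_sum[OF Hs] subspace_scale[OF Hs]) blast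
          hence "(\<Sum>b\<in>B'. c' b *s b) \<in> fit scale br H" using sF fitH by blast
          thus "c' x = 0" using indep_modD[OF indBH fB' _ _ x] B'B B1BH by blast
        qed
        obtain B0 where B0: "finite B0" "B0 \<subseteq> B" "B1 \<subseteq> span (B0 \<union> ?F)"
          using finspan[OF fB1, of B ?F] Bsp by blast
        have "mindep scale br b B" using tf bF b0 unfolding tf_iff by blast
        hence md0: "mindep scale br b B0" using mindep_mono B0(2) by blast
        have "mindep scale br b B1"
          by (rule A.transfer[OF bF B0(1) subset_UNIV md0 fB1 subset_UNIV indB1 B0(3)])
        thus "\<forall>M\<in>K. c M = 0" using mindepD[OF _ fK _ s] unfolding B1_def by blast
      qed
    qed
    thus ?thesis unfolding U_algebra_def using abH BH by blast
  qed
qed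

end


context MLA begin

lemma reverse:
  assumes all: "\<forall>X. finite X \<longrightarrow> U_algebra scale br (lie_gen scale br X)"
  shows "U_algebra scale br UNIV"
proof -
  let ?F = "fit scale br UNIV"
  let ?U = "\<Union>{I. lie_ideal scale br UNIV I \<and> lie_nilpotent scale br I}"
  have ab: "lie_abelian br ?F" unfolding lie_abelian_def
  proof (intro ballI)
    fix x y assume x: "x \<in> ?F" and y: "y \<in> ?F"
    have "x \<in> span ?U" using x fit_sub_span[OF UNIV_subalg] by blast
    then obtain t r where t: "finite t" "t \<subseteq> ?U" "x = (\<Sum>a\<in>t. r a *s a)"
      unfolding span_explicit by blast
    have "y \<in> span ?U" using y fit_sub_span[OF UNIV_subalg] by blast
    then obtain t' r' where t': "finite t'" "t' \<subseteq> ?U" "y = (\<Sum>a\<in>t'. r' a *s a)"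
      unfolding span_explicit by blast
    define H where "H = lie_gen scale br (t \<union> t')"
    have H: "lie_subalg scale br H" unfolding H_def by (rule gen_subalg)
    have fintt: "finite (t \<union> t')" using t(1) t'(1) by simp
    have UH: "U_algebra scale br H" unfolding H_def by (rule all[rule_format, OF fintt])
    have sfH: "subspace (fit scale br H)" using fit_ideal[OF H] unfolding lie_ideal_def by blast
    have inH: "e \<in> fit scale br H" if "e \<in> t \<union> t'" for e
    proof -
      have "e \<in> ?U" using that t(2) t'(2) by blast
      moreover have "e \<in> H" using that gen_sup[of "t \<union> t'"] unfolding H_def by blast
      ultimately show ?thesis using nil_elem H by blast
    qed
    have "x \<in> fit scale br H" unfolding t(3) by (rule subspace_sum[OF sfH], rule subspace_scale[OF sfH], rule inH) blast
    moreover have "y \<in> fit scale br H" unfolding t'(3) by (rule subspace_sum[OF sfH], rule subspace_scale[OF sfH], rule inH) blast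
    ultimately show "br x y = 0" using UH unfolding U_algebra_def lie_abelian_def by blast
  qed
  interpret A: SET scale br UNIV ?F by (rule SET_of[OF UNIV_subalg ab])
  obtain B where bm: "basis_mod scale UNIV ?F B"
    using basis_mod_exists[OF subspace_UNIV A.F_sub subset_UNIV] by blast
  have indB: "indep_mod scale ?F B" using bm unfolding basis_mod_iff by blast
  have "torsion_free scale br ?F B" unfolding tf_iff
  proof (intro ballI impI)
    fix b assume bF: "b \<in> ?F" and b0: "b \<noteq> 0"
    show "mindep scale br b B" unfolding mindep_def
    proof (intro allI impI, elim conjE)
      fix K c assume fK: "finite K" and KB: "\<forall>M\<in>K. set_mset M \<subseteq> B"
        and s: "(\<Sum>M\<in>K. c M *s mon_act br b M) = 0"
      define B0 where "B0 = \<Union>(set_mset ` K)"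
      have fB0: "finite B0" unfolding B0_def using fK by simp
      have B0B: "B0 \<subseteq> B" unfolding B0_def using KB by blast
      have indB0: "indep_mod scale ?F B0" using indep_mod_mono[OF indB B0B] .
      obtain M where M: "finite M" "M \<subseteq> ?F" "\<forall>u\<in>span B0. (\<forall>m\<in>M. br m u = 0) \<longrightarrow> u = 0"
        using mindim[OF ab fB0 indB0] by blast
      define H where "H = lie_gen scale br (B0 \<union> {b} \<union> M)"
      have H: "lie_subalg scale br H" unfolding H_def by (rule gen_subalg)
      have gH: "B0 \<union> {b} \<union> M \<subseteq> H" unfolding H_def by (rule gen_sup)
      have finG: "finite (B0 \<union> {b} \<union> M)" using fB0 M(1) by simp
      have UH: "U_algebra scale br H" unfolding H_def by (rule all[rule_format, OF finG])
      have abH: "lie_abelian br (fit scale br H)" using UH unfolding U_algebra_def by blast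
      obtain BH where BH: "basis_mod scale H (fit scale br H) BH" and tfH: "torsion_free scale br (fit scale br H) BH"
        using UH unfolding U_algebra_def by blast
      interpret HH: SET scale br H "fit scale br H" by (rule SET_of[OF H abH])
      have idA: "lie_ideal scale br UNIV ?F" by (rule fit_ideal[OF UNIV_subalg])
      have HI: "lie_ideal scale br H (?F \<inter> H)" by (rule ideal_inter[OF idA H subset_UNIV])
      have sHI: "subspace (?F \<inter> H)" using HI unfolding lie_ideal_def by blast
      have abHI: "lie_abelian br (?F \<inter> H)" using ab unfolding lie_abelian_def by blast
      have HIsub: "?F \<inter> H \<subseteq> fit scale br H" by (rule nil_fit[OF HI abelian_nil[OF sHI abHI]])
      have bH: "b \<in> fit scale br H" using HIsub bF gH by blast
      have MH: "M \<subseteq> fit scale br H" using HIsub M(2) gH by blast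
      have B0H: "B0 \<subseteq> H" using gH by blast
      have indB0H: "indep_mod scale (fit scale br H) B0" unfolding indep_mod_def
      proof (intro allI impI ballI, elim conjE)
        fix B' c' x assume fB': "finite B'" and B'B: "B' \<subseteq> B0" and sF: "(\<Sum>b\<in>B'. c' b *s b) \<in> fit scale br H"
          and x: "x \<in> B'"
        let ?u = "\<Sum>b\<in>B'. c' b *s b"
        have "?u \<in> span B0" using B'B by (intro span_sum span_scale) (auto intro: span_base)
        moreover have "\<forall>m\<in>M. br m ?u = 0" using MH sF abH unfolding lie_abelian_def by blast
        ultimately have "?u = 0" using M(3) by blast
        hence "?u \<in> ?F" using subspace_0[OF A.F_sub] by simp
        thus "c' x = 0" using indep_modD[OF indB0 fB' B'B _ x] by blast
      qed
      have BHsp: "H \<subseteq> span (BH \<union> fit scale br H)" using BH unfolding basis_mod_iff by blast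
      have "B0 \<subseteq> span (BH \<union> fit scale br H)" using B0H BHsp by (rule order_trans)
      from finspan[OF fB0 this] obtain BH0 where BH0: "finite BH0" "BH0 \<subseteq> BH" "B0 \<subseteq> span (BH0 \<union> fit scale br H)"
        by blast
      have "BH \<subseteq> H" using BH unfolding basis_mod_iff by blast
      hence BH0H: "BH0 \<subseteq> H" using BH0(2) by blast
      have "mindep scale br b BH" using tfH bH b0 unfolding tf_iff by blast
      hence md0: "mindep scale br b BH0" using mindep_mono BH0(2) by blast
      have "mindep scale br b B0"
        by (rule HH.transfer[OF bH BH0(1) BH0H md0 fB0 B0H indB0H BH0(3)])
      thus "\<forall>M\<in>K. c M = 0" using mindepD[OF _ fK _ s] unfolding B0_def by blast
    qed
  qed
  thus ?thesis unfolding U_algebra_def using ab bm by blast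
qed

end

theorem theorem3p2p3:
  fixes scale :: "'k::field \<Rightarrow> 'v::ab_group_add \<Rightarrow> 'v"
    and br :: "'v \<Rightarrow> 'v \<Rightarrow> 'v"
  assumes "lie_algebra scale br"
    and "metabelian br UNIV"
  shows "U_algebra scale br UNIV \<longleftrightarrow>
           (\<forall>X. finite X \<longrightarrow> U_algebra scale br (lie_gen scale br X))"
proof -
  interpret LA scale br by (rule LA_of[OF assms(1)])
  interpret MLA scale br
    by (rule MLA.intro, unfold_locales) (use assms(2) in \<open>simp add: metabelian_def\<close>)
  show ?thesis using forward[OF _ gen_subalg] reverse by blast
qed


end
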